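(* Let $\mathcal{A}\subset\mathbb{C}^n$ be a set of atoms whose convex hull is compact, centrally symmetric, and contains a ball of positive radius around the origin. Let $x^\star,w\in\mathbb{C}^n$, $y=x^\star+w$, and let $\tau>\|w\|_{\mathcal{A}}^*$. If $\hat{x}$ is the optimal solution of $$\operatorname*{minimize}_{x\in\mathbb{C}^n}\ \tfrac{1}{2}\|x-y\|_2^2+\tau\|x\|_{\mathcal{A}},$$ then $$\frac{1}{n}\|\hat{x}-x^\star\|_2^2\le\frac{1}{n}\left(\tau\|x^\star\|_{\mathcal{A}}-\langle x^\star,w\rangle\right)\le\frac{2\tau}{n}\|x^\star\|_{\mathcal{A}}.$$
   Context: The atomic norm is the gauge $\|x\|_{\mathcal{A}}=\inf\{t>0: x\in t\,\operatorname{conv}(\mathcal{A})\}$. The real inner product on $\mathbb{C}^n$ is $\langle x,z\rangle=\operatorname{Re}(z^*x)$. The dual atomic norm is $\|z\|_{\mathcal{A}}^*=\sup_{a\in\mathcal{A}}\langle z,a\rangle$. *)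

theory Defs
  imports "HOL-Analysis.Analysis"
begin

text \<open>C^n is modelled as complex ^ 'n (n = CARD('n)). Its inner product (from
  the vec/complex real_inner instances) is sum_i Re(x_i * cnj z_i) = Re(z^* x),
  and its norm is the Euclidean 2-norm.\<close>

definition atomic_norm :: "('a::real_vector) set \<Rightarrow> 'a \<Rightarrow> real" where
  "atomic_norm A x = Inf {t. t > 0 \<and> x \<in> (\<lambda>v. t *\<^sub>R v) ` (convex hull A)}"

definition dual_atomic_norm :: "('a::real_inner) set \<Rightarrow> 'a \<Rightarrow> real" where
  "dual_atomic_norm A z = (SUP a\<in>A. inner z a)"

end

theory Submission
  imports Defs
begin

lemma gauge_nonempty:
  fixes C :: "'a::real_normed_vector set"
  assumes "r > 0" "ball 0 r \<subseteq> C"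
  shows "\<exists>t>0. x \<in> (\<lambda>v. t *\<^sub>R v) ` C"
proof -
  define t where "t = 2 * norm x / r + 1"
  have "2 * norm x / r \<ge> 0" using assms by simp
  hence tp: "t > 0" by (simp add: t_def)
  have "r * t = 2 * norm x + r" using assms by (simp add: t_def field_simps)
  hence "norm x < r * t" using assms norm_ge_zero[of x] by linarith
  hence "norm (x /\<^sub>R t) < r" using tp by (simp add: field_simps)
  hence "x /\<^sub>R t \<in> C" using assms by auto
  moreover have "x = t *\<^sub>R (x /\<^sub>R t)" using tp by simp
  ultimately show ?thesis using tp by blast
qed

lemma gauge_nonneg:
  assumes "\<exists>t>0. x \<in> (\<lambda>v. t *\<^sub>R v) ` (convex hull A)"
  shows "atomic_norm A x \<ge> 0"
  unfolding atomic_norm_def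
  by (rule cInf_greatest) (use assms in auto)

lemma gauge_lower:
  assumes "t > 0" "x \<in> (\<lambda>v. t *\<^sub>R v) ` (convex hull A)"
  shows "atomic_norm A x \<le> t"
  unfolding atomic_norm_def
  by (rule cInf_lower) (use assms in \<open>auto intro!: bdd_belowI[of _ 0]\<close>)

lemma gauge_approx:
  assumes "\<exists>t>0. x \<in> (\<lambda>v. t *\<^sub>R v) ` (convex hull A)" "e > 0"
  shows "\<exists>t>0. x \<in> (\<lambda>v. t *\<^sub>R v) ` (convex hull A) \<and> t < atomic_norm A x + e"
proof -
  let ?S = "{t. t > 0 \<and> x \<in> (\<lambda>v. t *\<^sub>R v) ` (convex hull A)}"
  have "Inf ?S < atomic_norm A x + e" using assms by (simp add: atomic_norm_def)
  moreover have "?S \<noteq> {}" using assms by auto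
  moreover have "bdd_below ?S" by (auto intro!: bdd_belowI[of _ 0])
  ultimately have "\<exists>t\<in>?S. t < atomic_norm A x + e"
    by (subst cInf_less_iff[symmetric])
  then obtain t where "t \<in> ?S" "t < atomic_norm A x + e" by (rule bexE)
  thus ?thesis by blast
qed

lemma gauge_convex:
  fixes A :: "'a::real_vector set"
  assumes ne: "\<And>x. \<exists>t>0. x \<in> (\<lambda>v. t *\<^sub>R v) ` (convex hull A)"
    and s: "0 < s" "s < 1"
  shows "atomic_norm A ((1 - s) *\<^sub>R a + s *\<^sub>R b) \<le> (1 - s) * atomic_norm A a + s * atomic_norm A b"
proof (rule field_le_epsilon)
  fix e :: real assume e: "e > 0"
  obtain t1 where t1: "t1 > 0" "a \<in> (\<lambda>v. t1 *\<^sub>R v) ` (convex hull A)" "t1 < atomic_norm A a + e"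
    using gauge_approx[OF ne e] by blast
  obtain t2 where t2: "t2 > 0" "b \<in> (\<lambda>v. t2 *\<^sub>R v) ` (convex hull A)" "t2 < atomic_norm A b + e"
    using gauge_approx[OF ne e] by blast
  obtain v1 where v1: "v1 \<in> convex hull A" "a = t1 *\<^sub>R v1" using t1 by auto
  obtain v2 where v2: "v2 \<in> convex hull A" "b = t2 *\<^sub>R v2" using t2 by auto
  define T where "T = (1 - s) * t1 + s * t2"
  have Tp: "T > 0" using s t1 t2 by (simp add: T_def add_pos_pos)
  define v where "v = ((1 - s) * t1 / T) *\<^sub>R v1 + (s * t2 / T) *\<^sub>R v2"
  have "v \<in> convex hull A"
    unfolding v_def
  proof (rule convexD[OF convex_convex_hull v1(1) v2(1)])
    show "0 \<le> (1 - s) * t1 / T" using s t1 Tp by simp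
    show "0 \<le> s * t2 / T" using s t2 Tp by simp
    have "(1 - s) * t1 / T + s * t2 / T = T / T" by (simp only: add_divide_distrib[symmetric] T_def)
    thus "(1 - s) * t1 / T + s * t2 / T = 1" using Tp by simp
  qed
  moreover have "(1 - s) *\<^sub>R a + s *\<^sub>R b = T *\<^sub>R v"
  proof -
    have "T *\<^sub>R v = (T * ((1 - s) * t1 / T)) *\<^sub>R v1 + (T * (s * t2 / T)) *\<^sub>R v2"
      by (simp only: v_def scaleR_add_right scaleR_scaleR)
    also have "\<dots> = ((1 - s) * t1) *\<^sub>R v1 + (s * t2) *\<^sub>R v2"
      using Tp by simp
    also have "\<dots> = (1 - s) *\<^sub>R a + s *\<^sub>R b"
      by (simp only: v1(2) v2(2) scaleR_scaleR)
    finally show ?thesis by simp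
  qed
  ultimately have "atomic_norm A ((1 - s) *\<^sub>R a + s *\<^sub>R b) \<le> T"
    using gauge_lower[OF Tp] by auto
  also have "T \<le> (1 - s) * atomic_norm A a + s * atomic_norm A b + e"
  proof -
    have "(1 - s) * t1 \<le> (1 - s) * (atomic_norm A a + e)"
      using s t1 by (intro mult_left_mono) auto
    moreover have "s * t2 \<le> s * (atomic_norm A b + e)"
      using s t2 by (intro mult_left_mono) auto
    moreover have "(1 - s) * (atomic_norm A a + e) + s * (atomic_norm A b + e)
        = (1 - s) * atomic_norm A a + s * atomic_norm A b + e" by (simp add: algebra_simps)
    ultimately show ?thesis unfolding T_def by linarith
  qed
  finally show "atomic_norm A ((1 - s) *\<^sub>R a + s *\<^sub>R b) \<le> (1 - s) * atomic_norm A a + s * atomic_norm A b + e" .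
qed

lemma inner_gauge_bound:
  fixes A :: "'a::real_inner set"
  assumes hull: "\<And>v. v \<in> convex hull A \<Longrightarrow> inner v w \<le> D"
    and z: "0 \<in> convex hull A"
    and ne: "\<exists>t>0. x \<in> (\<lambda>v. t *\<^sub>R v) ` (convex hull A)"
  shows "inner x w \<le> D * atomic_norm A x"
proof -
  have D: "D \<ge> 0" using hull[OF z] by simp
  have key: "inner x w \<le> t * D" if tp: "t > 0" and tx: "x \<in> (\<lambda>v. t *\<^sub>R v) ` (convex hull A)" for t
  proof -
    obtain v where "v \<in> convex hull A" "x = t *\<^sub>R v" using tx unfolding image_iff by blast
    thus ?thesis using hull[of v] tp by (simp add: mult_left_mono)
  qed
  show ?thesis
  proof (cases "D = 0")
    case True
    obtain t where "t > 0" "x \<in> (\<lambda>v. t *\<^sub>R v) ` (convex hull A)" using ne by blast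
    thus ?thesis using key True by fastforce
  next
    case False
    hence Dp: "D > 0" using D by simp
    have "inner x w / D \<le> atomic_norm A x"
      unfolding atomic_norm_def
    proof (rule cInf_greatest)
      show "{t. 0 < t \<and> x \<in> (\<lambda>v. t *\<^sub>R v) ` (convex hull A)} \<noteq> {}" using ne by auto
    next
      fix t assume "t \<in> {t. 0 < t \<and> x \<in> (\<lambda>v. t *\<^sub>R v) ` (convex hull A)}"
      thus "inner x w / D \<le> t" using key Dp by (auto simp: divide_le_eq)
    qed
    thus ?thesis using Dp by (simp add: divide_le_eq mult.commute)
  qed
qed

lemma small_s:
  fixes c k :: real
  assumes "k \<ge> 0" "\<And>s. 0 < s \<Longrightarrow> s < 1 \<Longrightarrow> 0 \<le> c + s * k"
  shows "c \<ge> 0"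
proof (rule ccontr)
  assume c: "\<not> c \<ge> 0"
  show False
  proof (cases "k = 0")
    case True thus False using assms(2)[of "1/2"] c by simp
  next
    case False
    hence kp: "k > 0" using assms by simp
    define s where "s = min (1/2) (- c / (2 * k))"
    have sp: "0 < s" "s < 1" using c kp by (auto simp: s_def divide_less_0_iff)
    have "s * k \<le> (- c / (2 * k)) * k" using kp by (intro mult_right_mono) (auto simp: s_def)
    also have "\<dots> = - c / 2" using kp by simp
    finally show False using assms(2)[OF sp] c by simp
  qed
qed

theorem proposition1:
  fixes A :: "(complex ^ 'n) set" and xstar w y xhat :: "complex ^ 'n" and \<tau> :: real
  assumes compact_hull: "compact (convex hull A)"
    and symm: "\<forall>x\<in>convex hull A. - x \<in> convex hull A"
    and ball: "\<exists>r>0. ball 0 r \<subseteq> convex hull A"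
    and y_def: "y = xstar + w"
    and tau: "\<tau> > dual_atomic_norm A w"
    and opt: "\<forall>x. (1/2) * (norm (xhat - y))\<^sup>2 + \<tau> * atomic_norm A xhat
                   \<le> (1/2) * (norm (x - y))\<^sup>2 + \<tau> * atomic_norm A x"
  shows "(1 / real CARD('n)) * (norm (xhat - xstar))\<^sup>2
           \<le> (1 / real CARD('n)) * (\<tau> * atomic_norm A xstar - inner xstar w)
         \<and> (1 / real CARD('n)) * (\<tau> * atomic_norm A xstar - inner xstar w)
           \<le> (2 * \<tau> / real CARD('n)) * atomic_norm A xstar"
proof -
  let ?N = "atomic_norm A"
  define D where "D = dual_atomic_norm A w"
  obtain r where r: "r > 0" "ball 0 r \<subseteq> convex hull A" using ball by blast
  have ne: "\<And>x. \<exists>t>0. x \<in> (\<lambda>v. t *\<^sub>R v) ` (convex hull A)"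
    using gauge_nonempty[OF r] by blast
  have z: "0 \<in> convex hull A" using r by auto
  have Nnn: "\<And>x. ?N x \<ge> 0" using gauge_nonneg ne by blast
  have bA: "bounded A" using compact_imp_bounded[OF compact_hull]
    by (meson bounded_subset hull_subset)
  then obtain B where B: "\<And>a. a \<in> A \<Longrightarrow> norm a \<le> B" unfolding bounded_iff by blast
  have bdd: "bdd_above ((\<lambda>a. inner w a) ` A)"
  proof (rule bdd_aboveI2)
    fix a assume "a \<in> A"
    hence "inner w a \<le> norm w * B"
      using B[of a] norm_cauchy_schwarz[of w a] by (meson mult_left_mono norm_ge_zero order_trans)
    thus "inner w a \<le> norm w * B" .
  qed
  have onA: "\<And>a. a \<in> A \<Longrightarrow> inner a w \<le> D"
    unfolding D_def dual_atomic_norm_def using cSUP_upper[OF _ bdd] by (simp add: inner_commute)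
  have "convex hull A \<subseteq> {v. inner w v \<le> D}"
  proof (rule hull_minimal)
    show "A \<subseteq> {v. inner w v \<le> D}" using onA by (auto simp: inner_commute)
    show "convex {v. inner w v \<le> D}" by (rule convex_halfspace_le)
  qed
  hence hullb: "\<And>v. v \<in> convex hull A \<Longrightarrow> inner v w \<le> D" by (auto simp: inner_commute)
  have ib: "\<And>x. inner x w \<le> D * ?N x"
    using inner_gauge_bound[OF hullb z ne] by blast
  have D0: "D \<ge> 0" using hullb[OF z] by simp
  have tau0: "\<tau> \<ge> 0" using tau D0 D_def by simp
  have ib2: "\<And>x. inner x w \<le> \<tau> * ?N x"
    using ib Nnn tau D_def by (meson less_imp_le mult_right_mono order_trans)
  define d where "d = xstar - xhat"
  define c where "c = inner (xhat - y) d + \<tau> * (?N xstar - ?N xhat)"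
  have S: "0 \<le> c + s * ((norm d)\<^sup>2 / 2)" if s: "0 < s" "s < 1" for s
  proof -
    have eq: "xhat + s *\<^sub>R d = (1 - s) *\<^sub>R xhat + s *\<^sub>R xstar"
      by (simp add: d_def algebra_simps)
    have cv: "?N (xhat + s *\<^sub>R d) \<le> (1 - s) * ?N xhat + s * ?N xstar"
      unfolding eq by (rule gauge_convex[OF ne s])
    have sq: "(norm (xhat + s *\<^sub>R d - y))\<^sup>2 = (norm (xhat - y))\<^sup>2 + 2 * s * inner (xhat - y) d + s\<^sup>2 * (norm d)\<^sup>2"
    proof -
      have "xhat + s *\<^sub>R d - y = (xhat - y) + s *\<^sub>R d" by simp
      thus ?thesis by (simp only: power2_norm_eq_inner inner_add_left inner_add_right inner_scaleR_left inner_scaleR_right inner_commute[of d "xhat - y"]) (simp add: power2_eq_square algebra_simps)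
    qed
    have o: "(1/2) * (norm (xhat - y))\<^sup>2 + \<tau> * ?N xhat
                   \<le> (1/2) * (norm (xhat + s *\<^sub>R d - y))\<^sup>2 + \<tau> * ?N (xhat + s *\<^sub>R d)"
      using opt by blast
    have "\<tau> * ?N (xhat + s *\<^sub>R d) \<le> \<tau> * ((1 - s) * ?N xhat + s * ?N xstar)"
      using mult_left_mono[OF cv tau0] .
    with o sq have "0 \<le> s * inner (xhat - y) d + s\<^sup>2 * (norm d)\<^sup>2 / 2 + \<tau> * s * (?N xstar - ?N xhat)"
      by (simp add: algebra_simps)
    also have "\<dots> = s * (c + s * ((norm d)\<^sup>2 / 2))"
      by (simp add: c_def power2_eq_square algebra_simps)
    finally show ?thesis using s by (simp add: zero_le_mult_iff)
  qed
  have c0: "c \<ge> 0"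
    by (rule small_s[of "(norm d)\<^sup>2 / 2"]) (simp, rule S)
  have "inner (xhat - y) d = - (norm d)\<^sup>2 - inner w d"
  proof -
    have "xhat - y = - d - w" unfolding y_def d_def by (simp add: algebra_simps)
    hence "inner (xhat - y) d = - inner d d - inner w d" by (simp add: inner_diff_left)
    thus ?thesis by (simp add: power2_norm_eq_inner)
  qed
  hence "(norm d)\<^sup>2 \<le> - inner w d + \<tau> * (?N xstar - ?N xhat)" using c0 by (simp add: c_def)
  also have "- inner w d = inner xhat w - inner xstar w"
    by (simp add: d_def inner_diff_right inner_commute)
  finally have "(norm d)\<^sup>2 \<le> inner xhat w - \<tau> * ?N xhat + \<tau> * ?N xstar - inner xstar w"
    by (simp add: algebra_simps)
  hence f1: "(norm (xhat - xstar))\<^sup>2 \<le> \<tau> * ?N xstar - inner xstar w"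
    using ib2[of xhat] by (simp add: d_def norm_minus_commute)
  have Nm: "?N (- xstar) \<le> ?N xstar"
  proof (rule field_le_epsilon)
    fix e :: real assume e: "e > 0"
    obtain t where t: "t > 0" "xstar \<in> (\<lambda>v. t *\<^sub>R v) ` (convex hull A)" "t < ?N xstar + e"
      using gauge_approx[OF ne e] by blast
    then obtain v where v: "v \<in> convex hull A" "xstar = t *\<^sub>R v" by auto
    have "- xstar \<in> (\<lambda>v. t *\<^sub>R v) ` (convex hull A)"
      using symm v by (intro image_eqI[of _ _ "- v"]) auto
    hence "?N (- xstar) \<le> t" using gauge_lower t by blast
    thus "?N (- xstar) \<le> ?N xstar + e" using t by simp
  qed
  have "- inner xstar w \<le> \<tau> * ?N xstar"
    using ib2[of "- xstar"] Nm tau0 by (simp add: order_trans mult_left_mono)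
  hence f2: "\<tau> * ?N xstar - inner xstar w \<le> 2 * \<tau> * ?N xstar" by simp
  have n: "1 / real CARD('n) \<ge> 0" by simp
  show ?thesis
  proof
    show "(1 / real CARD('n)) * (norm (xhat - xstar))\<^sup>2 \<le> (1 / real CARD('n)) * (\<tau> * ?N xstar - inner xstar w)"
      using f1 n by (rule mult_left_mono)
    have "(1 / real CARD('n)) * (\<tau> * ?N xstar - inner xstar w) \<le> (1 / real CARD('n)) * (2 * \<tau> * ?N xstar)"
      using f2 n by (rule mult_left_mono)
    thus "(1 / real CARD('n)) * (\<tau> * ?N xstar - inner xstar w) \<le> (2 * \<tau> / real CARD('n)) * ?N xstar"
      by simp
  qed
qed

end
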